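(* Let $a\in\mathbb Z^+$ and let $\psi:\mathbb Z\to\mathbb Z$ be a function such that for every $k\in\mathbb Z$ and every $j\in\{1,\dots,a\}$, $\psi(k)\equiv\psi(-k)\pmod{3^a}$ and $\psi(k+3^j)\equiv\psi(k)\pmod{3^j}$. For $1\le k\le 3^a-1$ set $$\Psi_a(k)=\frac{\psi(3^a-k)-\psi(k)}{3^a}+\frac{3^a-1}{2}-k .$$ Then $$\frac{1}{2[3^a]_q^2}\sum_{k=1}^{3^a-1}q^{\psi(k)}\left(\frac{k}{3}\right)\begin{bmatrix}2\cdot 3^a\\k\end{bmatrix}_q\equiv \sum_{\substack{1\le k\le 3^a-1\\ k\equiv1\ (\mathrm{mod}\ 3)}} q^{\psi(k)-\frac{k(k-1)}{2}}\,\frac{(-1)^{k-1}}{[k]_q^2}\bigl(1+\Psi_a(k)(1-q^k)\bigr)\pmod{\Phi_{3^a}(q)}.$$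
   Context: $\left(\frac{k}{3}\right)$ is the Legendre symbol: $0$ if $3\mid k$, $1$ if $k\equiv1\pmod 3$, $-1$ if $k\equiv 2\pmod 3$. For $n\in\mathbb N$, $[n]_q=\frac{1-q^n}{1-q}=\sum_{0\le j<n}q^j$. For $n,k\in\mathbb N$ the $q$-binomial coefficient is $\begin{bmatrix}n\\k\end{bmatrix}_q=\frac{[n]_q[n-1]_q\cdots[n-k+1]_q}{[1]_q[2]_q\cdots[k]_q}$ if $0<k\le n$, equal to $1$ if $k=0$, and $0$ if $k>n$. $\Phi_{3^a}(q)=\frac{q^{3^a}-1}{q^{3^{a-1}}-1}$ is the $3^a$-th cyclotomic polynomial. Congruence convention: for rational functions $A,B$ in $q$ with rational coefficients (Laurent polynomials allowed) and a nonconstant polynomial $M\in\mathbb Z[q]$, $A\equiv B\pmod{M}$ means $A-B=M\cdot C$ for some rational function $C$ whose reduced denominator is coprime to $M$ in $\mathbb Q[q]$. (The sum on the left is divisible by $[3^a]_q^2$, and the $[k]_q$ with $3\nmid k$ are coprime to $\Phi_{3^a}(q)$.) *)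

theory Defs
  imports "HOL-Computational_Algebra.Computational_Algebra" "HOL-Computational_Algebra.Field_as_Ring" "HOL-Number_Theory.Number_Theory"
begin

type_synonym rfun = "rat poly fract"

definition qvar :: rfun where
  "qvar = to_fract [:0, 1:]"

definition rconst :: "rat \<Rightarrow> rfun" where
  "rconst c = to_fract [:c:]"

definition qint :: "nat \<Rightarrow> rfun" where
  "qint n = (\<Sum>j<n. qvar ^ j)"

definition qbinom :: "nat \<Rightarrow> nat \<Rightarrow> rfun" where
  "qbinom n k =
     (if k = 0 then 1
      else if k > n then 0
      else (\<Prod>i<k. qint (n - i)) / (\<Prod>i\<in>{1..k}. qint i))"

text \<open>cyclotomic polynomial Phi_{3^a}(q) = (q^{3^a}-1)/(q^{3^{a-1}}-1), for a \<ge> 1\<close>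
definition Phi3 :: "nat \<Rightarrow> rat poly" where
  "Phi3 a = ([:0, 1:] ^ (3 ^ a) - 1) div ([:0, 1:] ^ (3 ^ (a - 1)) - 1)"

definition qcong_mod :: "rfun \<Rightarrow> rfun \<Rightarrow> rat poly \<Rightarrow> bool" where
  "qcong_mod A B M \<longleftrightarrow>
     (\<exists>C. A - B = to_fract M * C \<and> coprime (snd (quot_of_fract C)) M)"

end

theory Submission
  imports Defs
begin


definition pX :: "rat poly" where "pX = [:0,1:]"
definition qp :: "nat \<Rightarrow> rat poly" where "qp n = (\<Sum>j<n. pX ^ j)"

lemma to_fract_power: "to_fract (x ^ n) = to_fract x ^ n"
  by (induction n) auto

lemma qint_qp: "qint n = to_fract (qp n)"
  by (simp add: qint_def qp_def qvar_def pX_def to_fract_power)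

lemma qp_geom: "(pX - 1) * qp n = pX ^ n - 1"
  by (induction n) (auto simp: qp_def algebra_simps)

lemma pow_sub_one_dvd: fixes x :: "'a::comm_ring_1" shows "x ^ n - 1 dvd x ^ (n * q) - 1"
proof (induction q)
  case 0 then show ?case by simp
next
  case (Suc q)
  have "x ^ (n * Suc q) - 1 = x ^ n * (x ^ (n * q) - 1) + (x ^ n - 1)"
    by (simp add: power_add algebra_simps)
  then show ?case by (simp only:) (intro dvd_add dvd_mult Suc.IH dvd_refl)
qed

lemma dvd_pow_gcd: fixes x d :: "'a::comm_ring_1"
  shows "d dvd x ^ m - 1 \<Longrightarrow> d dvd x ^ n - 1 \<Longrightarrow> d dvd x ^ (gcd m n) - 1"
proof (induction m n rule: gcd_nat_induct)
  case (base m) then show ?case by simp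
next
  case (step m n)
  have e: "x ^ m - 1 = x ^ (m mod n) * (x ^ (n * (m div n)) - 1) + (x ^ (m mod n) - 1)"
  proof -
    have "m = m mod n + n * (m div n)" by simp
    then have "x ^ m = x ^ (m mod n) * x ^ (n * (m div n))" by (metis power_add)
    then show ?thesis by (simp add: algebra_simps)
  qed
  have "d dvd x ^ (n * (m div n)) - 1" using step.prems(2) pow_sub_one_dvd dvd_trans by blast
  then have "d dvd x ^ (m mod n) * (x ^ (n * (m div n)) - 1)" by simp
  then have "d dvd x ^ (m mod n) - 1" using step.prems(1) e
    by (metis add_diff_cancel_left' dvd_diff)
  then have "d dvd x ^ (gcd n (m mod n)) - 1" using step.IH step.prems(2) by blast
  then show ?case using step.hyps by (metis gcd_non_0_nat less_numeral_extra(3))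
qed

lemma Phi3_eq:
  assumes "a > 0"
  shows "pX ^ (3 ^ a) - 1 = Phi3 a * (pX ^ (3 ^ (a - 1)) - 1)"
    and "Phi3 a = 1 + pX ^ (3 ^ (a - 1)) + pX ^ (2 * 3 ^ (a - 1))"
proof -
  define M where "M = (3 ^ (a - 1) :: nat)"
  have N: "(3::nat) ^ a = 3 * M" using assms unfolding M_def by (cases a) simp_all
  have M0: "M > 0" by (simp add: M_def)
  have ne: "pX ^ M - 1 \<noteq> 0"
  proof
    assume "pX ^ M - 1 = 0"
    then have "degree (pX ^ M) = degree (1 :: rat poly)" by simp
    then show False using M0 by (simp add: pX_def degree_power_eq)
  qed
  have y3: "pX ^ (3 * M) = (pX ^ M) ^ 3" by (subst mult.commute) (rule power_mult)
  have y2: "pX ^ (2 * M) = (pX ^ M) ^ 2" by (subst mult.commute) (rule power_mult)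
  have r: "(y::rat poly) ^ 3 - 1 = (y - 1) * (1 + y + y ^ 2)" for y
    by (simp add: algebra_simps power2_eq_square power3_eq_cube)
  have f: "pX ^ (3 ^ a) - 1 = (pX ^ M - 1) * (1 + pX ^ M + pX ^ (2 * M))"
    unfolding N y3 y2 by (rule r)
  have "Phi3 a = (pX ^ (3 ^ a) - 1) div (pX ^ M - 1)"
    unfolding Phi3_def M_def pX_def ..
  also have "\<dots> = (1 + pX ^ M + pX ^ (2 * M))"
    unfolding f using ne by (rule nonzero_mult_div_cancel_left)
  finally have Q: "Phi3 a = (1 + pX ^ M + pX ^ (2 * M))" .
  then show "Phi3 a = 1 + pX ^ (3 ^ (a - 1)) + pX ^ (2 * 3 ^ (a - 1))" by (simp only: M_def)
  show "pX ^ (3 ^ a) - 1 = Phi3 a * (pX ^ (3 ^ (a - 1)) - 1)"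
    unfolding f Q M_def[symmetric] by (rule mult.commute)
qed



lemma pX_ne1: "pX - 1 \<noteq> 0"
proof
  assume "pX - 1 = 0" then have "pX = 1" by simp
  then show False by (simp add: pX_def one_pCons)
qed

lemma qp_N: assumes "a > 0" shows "qp (3 ^ a) = Phi3 a * qp (3 ^ (a - 1))"
proof -
  have "(pX - 1) * qp (3 ^ a) = pX ^ (3 ^ a) - 1" by (rule qp_geom)
  also have "\<dots> = Phi3 a * (pX ^ (3 ^ (a - 1)) - 1)" by (rule Phi3_eq(1)[OF assms])
  also have "\<dots> = Phi3 a * ((pX - 1) * qp (3 ^ (a - 1)))" by (simp only: qp_geom)
  also have "\<dots> = (pX - 1) * (Phi3 a * qp (3 ^ (a - 1)))" by (simp only: mult.left_commute)
  finally have "(pX - 1) * qp (3 ^ a) = (pX - 1) * (Phi3 a * qp (3 ^ (a - 1)))" .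
  then show ?thesis using pX_ne1 by simp
qed

lemma Phi3_dvd: assumes "a > 0" shows "Phi3 a dvd pX ^ (3 ^ a) - 1"
  unfolding Phi3_eq(1)[OF assms] by (rule dvd_triv_left)

lemma three_unit: "is_unit (3::rat poly)"
proof -
  have t2: "(3::rat poly) = [:3:]" by (simp add: numeral_poly)
  have "(1::rat) = 3 * (1/3)" by simp
  then have "(3::rat) dvd 1" by (rule dvdI)
  then show ?thesis unfolding t2 is_unit_const_poly_iff .
qed

lemma coprime_qp: assumes "a > 0" "0 < i" "i < 3 ^ a" shows "coprime (qp i) (Phi3 a)"
proof (rule coprimeI)
  fix d assume d1: "d dvd qp i" and d2: "d dvd Phi3 a"
  define M where "M = (3 ^ (a - 1) :: nat)"
  have "qp i dvd pX ^ i - 1" unfolding qp_geom[of i, symmetric] by (rule dvd_triv_right)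
  then have "d dvd pX ^ i - 1" using d1 by (rule dvd_trans[rotated])
  moreover have "d dvd pX ^ (3 ^ a) - 1" using d2 Phi3_dvd[OF assms(1)] by (rule dvd_trans)
  ultimately have g: "d dvd pX ^ (gcd i (3 ^ a)) - 1" by (rule dvd_pow_gcd)
  have "gcd i (3 ^ a) dvd 3 ^ a" by (rule gcd_dvd2)
  then obtain e where e: "e \<le> a" "gcd i (3 ^ a) = 3 ^ e"
    using divides_primepow_nat[of 3 "gcd i (3 ^ a)" a] by auto
  have "gcd i (3 ^ a) \<le> i" using assms(2) by (simp add: gcd_le1_nat)
  then have "(3::nat) ^ e < 3 ^ a" using e(2) assms(3) by linarith
  then have "e < a" by (simp add: power_strict_increasing_iff)
  then have "e \<le> a - 1" by linarith
  then have "gcd i (3 ^ a) dvd M" unfolding M_def e(2) by (rule le_imp_power_dvd)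
  then obtain c where c: "M = gcd i (3 ^ a) * c" by (rule dvdE)
  have "pX ^ (gcd i (3 ^ a)) - 1 dvd pX ^ M - 1" unfolding c by (rule pow_sub_one_dvd)
  with g have "d dvd pX ^ M - 1" by (rule dvd_trans)
  then have "d dvd (pX ^ M - 1) * (pX ^ M + 2)" by (rule dvd_mult2)
  moreover have PP: "Phi3 a = 3 + (pX ^ M - 1) * (pX ^ M + 2)"
  proof -
    have y2: "pX ^ (2 * M) = (pX ^ M) ^ 2" by (subst mult.commute) (rule power_mult)
    have r: "1 + y + y ^ 2 = 3 + (y - 1) * (y + 2)" for y :: "rat poly"
      by (simp add: algebra_simps power2_eq_square)
    show ?thesis using Phi3_eq(2)[OF assms(1)] unfolding M_def[symmetric] y2 r .
  qed
  ultimately have "d dvd Phi3 a - (pX ^ M - 1) * (pX ^ M + 2)" using d2 by (intro dvd_diff)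
  then have "d dvd 3" unfolding PP by simp
  then show "is_unit d" using three_unit by (rule dvd_unit_imp_unit)
qed

lemma coprime_pX: assumes "a > 0" shows "coprime pX (Phi3 a)"
proof (rule coprimeI)
  fix d assume d1: "d dvd pX" and d2: "d dvd Phi3 a"
  have "pX dvd pX ^ (3 ^ a)" by (simp add: dvd_power)
  with d1 have "d dvd pX ^ (3 ^ a)" by (rule dvd_trans)
  moreover have "d dvd pX ^ (3 ^ a) - 1" using d2 Phi3_dvd[OF assms(1)] by (rule dvd_trans)
  ultimately have "d dvd pX ^ (3 ^ a) - (pX ^ (3 ^ a) - 1)" by (rule dvd_diff)
  then show "is_unit d" by simp
qed

lemma qp_ne0: "0 < i \<Longrightarrow> qp i \<noteq> 0"
proof
  assume "0 < i" "qp i = 0"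
  then have "pX ^ i - 1 = 0" using qp_geom[of i] by simp
  then have "degree (pX ^ i) = degree (1 :: rat poly)" by simp
  then show False using \<open>0 < i\<close> by (simp add: pX_def degree_power_eq)
qed



definition Ph :: "nat \<Rightarrow> rfun" where "Ph a = to_fract (Phi3 a)"
definition loc :: "nat \<Rightarrow> rfun \<Rightarrow> bool" where
  "loc a x \<longleftrightarrow> (\<exists>p s. s \<noteq> 0 \<and> coprime s (Phi3 a) \<and> x = to_fract p / to_fract s)"
definition cg :: "nat \<Rightarrow> nat \<Rightarrow> rfun \<Rightarrow> rfun \<Rightarrow> bool" where
  "cg a r A B \<longleftrightarrow> (\<exists>C. loc a C \<and> A - B = Ph a ^ r * C)"

lemma loc_tf [simp]: "loc a (to_fract p)"
  unfolding loc_def by (rule exI[of _ p], rule exI[of _ 1]) simp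

lemma loc_0 [simp]: "loc a 0" using loc_tf[of a 0] by simp
lemma loc_1 [simp]: "loc a 1" using loc_tf[of a 1] by simp

lemma loc_add: "loc a x \<Longrightarrow> loc a y \<Longrightarrow> loc a (x + y)"
proof -
  assume "loc a x" "loc a y"
  then obtain p1 s1 p2 s2 where h: "s1 \<noteq> 0" "coprime s1 (Phi3 a)" "x = to_fract p1 / to_fract s1"
     "s2 \<noteq> 0" "coprime s2 (Phi3 a)" "y = to_fract p2 / to_fract s2" unfolding loc_def by blast
  have "x + y = to_fract (p1 * s2 + p2 * s1) / to_fract (s1 * s2)" using h by (simp add: field_simps)
  then show ?thesis unfolding loc_def using h by (intro exI[of _ "p1 * s2 + p2 * s1"] exI[of _ "s1 * s2"]) auto
qed

lemma loc_mult: "loc a x \<Longrightarrow> loc a y \<Longrightarrow> loc a (x * y)"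
proof -
  assume "loc a x" "loc a y"
  then obtain p1 s1 p2 s2 where h: "s1 \<noteq> 0" "coprime s1 (Phi3 a)" "x = to_fract p1 / to_fract s1"
     "s2 \<noteq> 0" "coprime s2 (Phi3 a)" "y = to_fract p2 / to_fract s2" unfolding loc_def by blast
  have "x * y = to_fract (p1 * p2) / to_fract (s1 * s2)" using h by (simp add: field_simps)
  then show ?thesis unfolding loc_def using h by (intro exI[of _ "p1 * p2"] exI[of _ "s1 * s2"]) auto
qed

lemma loc_uminus: "loc a x \<Longrightarrow> loc a (- x)"
proof -
  assume "loc a x"
  then have "loc a (to_fract (-1) * x)" by (intro loc_mult loc_tf)
  then show ?thesis by simp
qed

lemma loc_diff: "loc a x \<Longrightarrow> loc a y \<Longrightarrow> loc a (x - y)"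
  using loc_add[of a x "-y"] loc_uminus[of a y] by simp

lemma loc_sum: "(\<And>i. i \<in> S \<Longrightarrow> loc a (f i)) \<Longrightarrow> loc a (sum f S)"
  by (induction S rule: infinite_finite_induct) (auto intro!: loc_add)

lemma loc_prod: "(\<And>i. i \<in> S \<Longrightarrow> loc a (f i)) \<Longrightarrow> loc a (prod f S)"
  by (induction S rule: infinite_finite_induct) (auto intro!: loc_mult)

lemma loc_power: "loc a x \<Longrightarrow> loc a (x ^ n)"
  by (induction n) (auto intro!: loc_mult)

lemma loc_inv: "s \<noteq> 0 \<Longrightarrow> coprime s (Phi3 a) \<Longrightarrow> loc a (1 / to_fract s)"
  unfolding loc_def by (intro exI[of _ 1] exI[of _ s]) auto

lemma loc_of_int [simp]: "loc a (of_int z)"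
proof -
  have n: "(of_nat n :: rfun) = to_fract (of_nat n)" for n by (induction n) simp_all
  have "(of_int z :: rfun) = to_fract (of_int z)"
    by (cases z rule: int_cases) (simp_all add: n[symmetric])
  then show ?thesis by simp
qed

lemma loc_of_nat [simp]: "loc a (of_nat z)"
  using loc_of_int[of a "int z"] by simp

lemma loc_numeral [simp]: "loc a (numeral n)"
  using loc_of_nat[of a "numeral n"] by simp

lemma loc_rconst [simp]: "loc a (rconst c)"
  by (simp add: rconst_def)

lemma loc_qvar [simp]: "loc a qvar" by (simp add: qvar_def)

lemma loc_qint [simp]: "loc a (qint n)" by (simp add: qint_qp)

lemma loc_qvar_powi: assumes "a > 0" shows "loc a (qvar powi z)"
proof (cases "z \<ge> 0")
  case True then have "qvar powi z = qvar ^ nat z" by (simp add: power_int_def)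
  then show ?thesis by (simp only: loc_power[OF loc_qvar])
next
  case False
  have "qvar powi z = 1 / to_fract (pX ^ nat (-z))" using False
    by (simp add: power_int_def qvar_def pX_def to_fract_power divide_inverse power_inverse)
  moreover have "pX ^ nat (-z) \<noteq> 0" by (simp add: pX_def)
  moreover have "coprime (pX ^ nat (-z)) (Phi3 a)" using coprime_pX[OF assms] by simp
  ultimately show ?thesis using loc_inv[of "pX ^ nat (-z)" a] by simp
qed

lemma loc_inv_qint: assumes "a > 0" "0 < i" "i < 3 ^ a" shows "loc a (1 / qint i)"
  unfolding qint_qp using qp_ne0[OF assms(2)] coprime_qp[OF assms] by (rule loc_inv)

lemma loc_divide_qint: assumes "a > 0" "0 < i" "i < 3 ^ a" "loc a x" shows "loc a (x / qint i)"
  using loc_mult[OF assms(4) loc_inv_qint[OF assms(1-3)]] by simp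

lemma cgI: "loc a C \<Longrightarrow> A - B = Ph a ^ r * C \<Longrightarrow> cg a r A B"
  unfolding cg_def by blast

lemma cgE: assumes "cg a r A B" obtains C where "loc a C" "A - B = Ph a ^ r * C"
  using assms unfolding cg_def by blast

lemma cg_refl [simp]: "cg a r A A"
  by (rule cgI[OF loc_0]) simp

lemma cg_eq: "A = B \<Longrightarrow> cg a r A B" by simp

lemma cg_sym: assumes "cg a r A B" shows "cg a r B A"
proof -
  obtain C where "loc a C" "A - B = Ph a ^ r * C" using assms by (rule cgE)
  then have "B - A = Ph a ^ r * (- C)" by (simp add: algebra_simps)
  then show ?thesis by (rule cgI[OF loc_uminus[OF \<open>loc a C\<close>]])
qed

lemma cg_trans [trans]: assumes "cg a r A B" "cg a r B C" shows "cg a r A C"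
proof -
  obtain X where X: "loc a X" "A - B = Ph a ^ r * X" using assms(1) by (rule cgE)
  obtain Y where Y: "loc a Y" "B - C = Ph a ^ r * Y" using assms(2) by (rule cgE)
  have "A - C = Ph a ^ r * (X + Y)" using X(2) Y(2) by (simp add: algebra_simps)
  then show ?thesis by (rule cgI[OF loc_add[OF X(1) Y(1)]])
qed

lemma cg_add: assumes "cg a r A B" "cg a r C D" shows "cg a r (A + C) (B + D)"
proof -
  obtain X where X: "loc a X" "A - B = Ph a ^ r * X" using assms(1) by (rule cgE)
  obtain Y where Y: "loc a Y" "C - D = Ph a ^ r * Y" using assms(2) by (rule cgE)
  have "A + C - (B + D) = Ph a ^ r * (X + Y)" using X(2) Y(2) by (simp add: algebra_simps)
  then show ?thesis by (rule cgI[OF loc_add[OF X(1) Y(1)]])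
qed

lemma cg_uminus: assumes "cg a r A B" shows "cg a r (- A) (- B)"
proof -
  obtain X where X: "loc a X" "A - B = Ph a ^ r * X" using assms(1) by (rule cgE)
  have "- A - (- B) = Ph a ^ r * (- X)" using X(2) by (simp add: algebra_simps)
  then show ?thesis by (rule cgI[OF loc_uminus[OF X(1)]])
qed

lemma cg_diff: "cg a r A B \<Longrightarrow> cg a r C D \<Longrightarrow> cg a r (A - C) (B - D)"
  using cg_add[of a r A B "-C" "-D"] cg_uminus[of a r C D] by simp

lemma cg_mult_loc: assumes "cg a r A B" "loc a X" shows "cg a r (X * A) (X * B)"
proof -
  obtain Y where Y: "loc a Y" "A - B = Ph a ^ r * Y" using assms(1) by (rule cgE)
  have "X * A - X * B = Ph a ^ r * (X * Y)" using Y(2) by (simp add: algebra_simps)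
  then show ?thesis by (rule cgI[OF loc_mult[OF assms(2) Y(1)]])
qed

lemma cg_mult_loc2: "cg a r A B \<Longrightarrow> loc a X \<Longrightarrow> cg a r (A * X) (B * X)"
  using cg_mult_loc[of a r A B X] by (simp add: mult.commute)

lemma cg_mult: assumes h: "cg a r A B" "cg a r C D" "loc a A" "loc a D" shows "cg a r (A * C) (B * D)"
proof -
  have "cg a r (A * C) (A * D)" using cg_mult_loc[OF h(2) h(3)] .
  moreover have "cg a r (A * D) (B * D)" using cg_mult_loc2[OF h(1) h(4)] .
  ultimately show ?thesis by (rule cg_trans)
qed

lemma cg_weaken: assumes "cg a r A B" "s \<le> r" shows "cg a s A B"
proof -
  obtain Y where Y: "loc a Y" "A - B = Ph a ^ r * Y" using assms(1) by (rule cgE)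
  have "Ph a ^ r = Ph a ^ s * Ph a ^ (r - s)" using assms(2)
    by (metis le_add_diff_inverse power_add)
  then have "A - B = Ph a ^ s * (Ph a ^ (r - s) * Y)" using Y(2) by (simp add: mult.assoc)
  moreover have "loc a (Ph a ^ (r - s) * Y)" unfolding Ph_def
    by (intro loc_mult loc_power loc_tf Y(1))
  ultimately show ?thesis using cgI by blast
qed

lemma cg_shift: assumes "cg a r A B" "cg a s Z 0" shows "cg a (r + s) (A * Z) (B * Z)"
proof -
  obtain X where X: "loc a X" "A - B = Ph a ^ r * X" using assms(1) by (rule cgE)
  obtain Y where Y: "loc a Y" "Z - 0 = Ph a ^ s * Y" using assms(2) by (rule cgE)
  have "A * Z - B * Z = Ph a ^ (r + s) * (X * Y)" using X(2) Y(2)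
    by (simp add: algebra_simps power_add)
  then show ?thesis by (rule cgI[OF loc_mult[OF X(1) Y(1)]])
qed

lemma cg_sum: "(\<And>i. i \<in> S \<Longrightarrow> cg a r (f i) (g i)) \<Longrightarrow> cg a r (sum f S) (sum g S)"
proof (induction S rule: infinite_finite_induct)
  case (insert x F) then show ?case by (simp add: cg_add)
qed simp_all

lemma cg_0: "loc a A \<Longrightarrow> loc a B \<Longrightarrow> cg a 0 A B"
  by (rule cgI[OF loc_diff]) simp_all

lemma cg_Ph: "loc a X \<Longrightarrow> cg a r (Ph a ^ r * X) 0"
  by (rule cgI[of a X]) simp_all

lemma cg_zero_loc: "cg a r A 0 \<Longrightarrow> cg a s B 0 \<Longrightarrow> cg a (r + s) (A * B) 0"
  using cg_shift[of a r A 0 s B] by simp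

lemma qcong_of_cg: assumes "cg a 1 A B" shows "qcong_mod A B (Phi3 a)"
proof -
  obtain C where C: "loc a C" "A - B = to_fract (Phi3 a) * C" using assms unfolding cg_def Ph_def by auto
  obtain p s where ps: "s \<noteq> 0" "coprime s (Phi3 a)" "C = to_fract p / to_fract s" using C(1) unfolding loc_def by blast
  define p' where "p' = fst (quot_of_fract C)"
  define s' where "s' = snd (quot_of_fract C)"
  have s'0: "s' \<noteq> 0" unfolding s'_def by simp
  have cop: "coprime p' s'" unfolding p'_def s'_def by (rule coprime_quot_of_fract)
  have "Fract p' s' = C" unfolding p'_def s'_def by (rule Fract_quot_of_fract)
  moreover have "Fract p s = C" using ps(3) by (simp add: Fract_conv_to_fract)
  ultimately have "Fract p' s' = Fract p s" by simp
  then have "p' * s = p * s'" using s'0 ps(1) by (simp add: eq_fract)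
  then have "s' dvd p' * s" by (metis dvd_triv_right)
  then have "s' dvd s" using cop by (simp add: coprime_commute coprime_dvd_mult_right_iff)
  then have "coprime s' (Phi3 a)" using ps(2) by (rule coprime_divisors[OF _ dvd_refl])
  then show ?thesis unfolding qcong_mod_def using C(2) s'_def by blast
qed



definition NN :: "nat \<Rightarrow> nat" where "NN a = 3 ^ a"
definition MM :: "nat \<Rightarrow> nat" where "MM a = 3 ^ (a - 1)"
definition tt :: "nat \<Rightarrow> rfun" where "tt a = qint (NN a)"
definition TT :: "nat \<Rightarrow> rfun" where "TT a = qint (2 * NN a)"

lemma qvar_ne0: "qvar \<noteq> 0" by (simp add: qvar_def)
lemma qvar_ne1: "qvar \<noteq> 1"
proof
  assume "qvar = 1"
  then have "to_fract [:0, 1:] = to_fract (1 :: rat poly)" by (simp add: qvar_def)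
  then show False by (simp add: one_pCons)
qed

lemma qint_geom: "(1 - qvar) * qint n = 1 - qvar ^ n"
proof -
  have "to_fract ((pX - 1) * qp n) = to_fract (pX ^ n - 1)" by (simp only: qp_geom)
  then have "(qvar - 1) * qint n = qvar ^ n - 1"
    by (simp add: qint_qp qvar_def pX_def to_fract_power)
  then show ?thesis by (simp add: algebra_simps)
qed

lemma qint_ne0: "0 < n \<Longrightarrow> qint n \<noteq> 0"
  by (simp add: qint_qp qp_ne0)

lemma qint_expr: "qint n = (1 - qvar ^ n) / (1 - qvar)"
  using qint_geom[of n] qvar_ne1 by (simp add: field_simps)

lemma qint_refl: assumes "i \<le> n" shows "qint (n - i) = qvar powi (- int i) * (qint n - qint i)"
proof -
  have e: "qvar ^ n = qvar ^ i * qvar ^ (n - i)" using assms by (metis le_add_diff_inverse power_add)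
  have p: "qvar powi (- int i) = 1 / qvar ^ i" by (simp add: power_int_minus divide_inverse)
  have g: "(1 - y) / (1 - q) = 1 / x * ((1 - x * y) / (1 - q) - (1 - x) / (1 - q))"
    if "x \<noteq> 0" "1 - q \<noteq> 0" for x y q :: rfun
  proof -
    have "(1 - x * y) / (1 - q) - (1 - x) / (1 - q) = x * (1 - y) / (1 - q)"
      by (simp add: diff_divide_distrib[symmetric] algebra_simps)
    then show ?thesis using that by simp
  qed
  show ?thesis unfolding qint_expr e p
    by (rule g) (use qvar_ne0 qvar_ne1 in simp_all)
qed

lemma NN_pos: "NN a > 0" by (simp add: NN_def)
lemma NN_eq: "a > 0 \<Longrightarrow> NN a = 3 * MM a" by (cases a) (simp_all add: NN_def MM_def)
lemma MM_pos: "MM a > 0" by (simp add: MM_def)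
lemma MM_less: "a > 0 \<Longrightarrow> MM a < 3 ^ a" using NN_eq[of a] MM_pos[of a] by (simp add: NN_def)

lemma tt_eq: "a > 0 \<Longrightarrow> tt a = Ph a * qint (MM a)"
  by (simp add: tt_def NN_def MM_def qint_qp qp_N Ph_def)

lemma TT_eq: "TT a = tt a * (1 + qvar ^ NN a)"
proof -
  have "(1 - qvar) * TT a = (1 - qvar) * (tt a * (1 + qvar ^ NN a))"
    unfolding TT_def tt_def mult.assoc[symmetric] qint_geom
    by (simp add: algebra_simps power_add[symmetric] mult_2 mult_2_right)
  then show ?thesis using qvar_ne1 by simp
qed

lemma qN_eq: "qvar ^ NN a = 1 + (qvar - 1) * tt a"
  using qint_geom[of "NN a"] unfolding tt_def by (simp add: algebra_simps)

lemma loc_tt: "loc a (tt a)" by (simp add: tt_def)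
lemma loc_TT: "loc a (TT a)" by (simp add: TT_def)

lemma cg_tt: assumes "a > 0" shows "cg a 1 (tt a) 0"
  using cg_Ph[of a "qint (MM a)" 1] tt_eq[OF assms] by simp

lemma cg_TT: assumes "a > 0" shows "cg a 1 (TT a) 0"
proof -
  have "TT a = Ph a ^ 1 * (qint (MM a) * (1 + qvar ^ NN a))"
    using TT_eq[of a] tt_eq[OF assms] by (simp add: mult.assoc)
  moreover have "loc a (qint (MM a) * (1 + qvar ^ NN a))"
    by (intro loc_mult loc_add loc_power loc_qint loc_1 loc_qvar)
  ultimately show ?thesis using cg_Ph by metis
qed

lemma to_fract_of_int: "to_fract (of_int z) = (of_int z :: rfun)"
proof -
  have n: "(of_nat n :: rfun) = to_fract (of_nat n)" for n by (induction n) simp_all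
  show ?thesis
    by (cases z rule: int_cases) (simp_all add: n[symmetric])
qed

lemma rconst_of_int: "rconst (of_int z) = of_int z"
proof -
  have "[:of_int z:] = (of_int z :: rat poly)" by (simp add: of_int_poly)
  then show ?thesis by (simp add: rconst_def to_fract_of_int)
qed



definition Ek :: "nat \<Rightarrow> rfun" where "Ek k = qvar powi (- int (k * (k - 1) div 2))"
definition G :: "nat \<Rightarrow> nat \<Rightarrow> rfun" where "G a k = (\<Prod>i\<in>{1..<k}. TT a / qint i - 1)"
definition Hs :: "nat \<Rightarrow> rfun" where "Hs k = (\<Sum>i\<in>{1..<k}. 1 / qint i)"

lemma tri_Suc: "(Suc k * k) div 2 = k * (k - 1) div 2 + k"
proof -
  have "Suc k * k = k * (k - 1) + k * 2" by (cases k) (simp_all add: algebra_simps)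
  then show ?thesis by simp
qed

lemma prod_Ek: "(\<Prod>i<k. qvar powi (- int i)) = Ek k"
proof (induction k)
  case 0 then show ?case by (simp add: Ek_def)
next
  case (Suc k)
  have "(\<Prod>i<Suc k. qvar powi (- int i)) = Ek k * qvar powi (- int k)"
    using Suc by simp
  also have "\<dots> = qvar powi (- int (k * (k - 1) div 2) + - int k)"
    unfolding Ek_def using power_int_add[of qvar "- int (k * (k - 1) div 2)" "- int k"] qvar_ne0 by simp
  also have "\<dots> = Ek (Suc k)"
  proof -
    have h: "Suc k * (Suc k - 1) div 2 = k * (k - 1) div 2 + k" using tri_Suc[of k] by (simp only: diff_Suc_1)
    show ?thesis unfolding Ek_def h by (simp only: of_nat_add minus_add_distrib)
  qed
  finally show ?case .
qed

lemma qbinom_formula: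
  assumes "1 \<le> k" "k \<le> 2 * NN a"
  shows "qbinom (2 * NN a) k = TT a * Ek k * G a k / qint k"
proof -
  have num: "(\<Prod>i<k. qint (2 * NN a - i)) = Ek k * (TT a * (\<Prod>i\<in>{1..<k}. TT a - qint i))"
  proof -
    have "(\<Prod>i<k. qint (2 * NN a - i)) = (\<Prod>i<k. qvar powi (- int i) * (TT a - qint i))"
      using assms(2) by (intro prod.cong refl) (simp add: qint_refl TT_def)
    also have "\<dots> = Ek k * (\<Prod>i<k. TT a - qint i)" by (simp add: prod.distrib prod_Ek)
    also have "(\<Prod>i<k. TT a - qint i) = (\<Prod>i\<in>{0..<k}. TT a - qint i)" by (simp add: lessThan_atLeast0)
    also have "\<dots> = (TT a - qint 0) * (\<Prod>i\<in>{1..<k}. TT a - qint i)"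
      using assms(1) by (subst prod.atLeast_Suc_lessThan) simp_all
    finally show ?thesis by (simp add: qint_def)
  qed
  have den: "(\<Prod>i\<in>{1..k}. qint i) = (\<Prod>i\<in>{1..<k}. qint i) * qint k"
    using assms(1) by (metis atLeastLessThanSuc_atLeastAtMost prod.atLeastLessThan_Suc)
  have quo: "(\<Prod>i\<in>{1..<k}. TT a - qint i) / (\<Prod>i\<in>{1..<k}. qint i) = G a k"
    unfolding G_def prod_dividef[symmetric]
    by (intro prod.cong refl) (simp add: diff_divide_distrib qint_ne0)
  have "qbinom (2 * NN a) k = (\<Prod>i<k. qint (2 * NN a - i)) / (\<Prod>i\<in>{1..k}. qint i)"
    unfolding qbinom_def using assms by simp
  also have "\<dots> = Ek k * TT a * ((\<Prod>i\<in>{1..<k}. TT a - qint i) / (\<Prod>i\<in>{1..<k}. qint i)) / qint k"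
    unfolding num den by (simp add: divide_inverse mult_ac)
  finally show ?thesis unfolding quo by (simp add: mult.commute)
qed

lemma alg1: "(q::rfun) \<noteq> 0 \<Longrightarrow> s * (1 - T * H) * (T / q - 1) = (- s) * (1 - T * (H + 1 / q)) + T * T * ((- s) * H / q)"
  by (simp add: field_simps)

lemma cg_TT2: assumes "a > 0" "loc a W" shows "cg a 2 (TT a * TT a * W) 0"
proof -
  have "cg a (1 + 1) (TT a * TT a) 0" using cg_zero_loc[OF cg_TT[OF assms(1)] cg_TT[OF assms(1)]] .
  then have "cg a 2 (TT a * TT a) 0" unfolding one_add_one .
  then have "cg a 2 (TT a * TT a * W) (0 * W)" using assms(2) by (rule cg_mult_loc2)
  then show ?thesis by simp
qed

lemma loc_Hs: assumes "a > 0" "k \<le> NN a" shows "loc a (Hs k)"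
  unfolding Hs_def using assms by (intro loc_sum loc_inv_qint) (auto simp: NN_def)

lemma G_cong:
  assumes "a > 0" "Suc j \<le> NN a"
  shows "cg a 2 (G a (Suc j)) ((-1) ^ j * (1 - TT a * Hs (Suc j)))"
  using assms(2)
proof (induction j)
  case 0 then show ?case by (simp add: G_def Hs_def)
next
  case (Suc j)
  define X where "X = TT a / qint (Suc j) - 1"
  define sg where "sg = ((-1) :: rfun) ^ j"
  have j1: "0 < Suc j" "Suc j < 3 ^ a" using Suc.prems by (auto simp: NN_def)
  have locX: "loc a X" unfolding X_def
    by (rule loc_diff[OF loc_divide_qint[OF assms(1) j1 loc_TT] loc_1])
  have GS: "G a (Suc (Suc j)) = G a (Suc j) * X"
    unfolding G_def X_def by (simp add: prod.atLeastLessThan_Suc)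
  have HS: "Hs (Suc (Suc j)) = Hs (Suc j) + 1 / qint (Suc j)"
    unfolding Hs_def by (simp add: sum.atLeastLessThan_Suc)
  have IH: "cg a 2 (G a (Suc j)) (sg * (1 - TT a * Hs (Suc j)))"
    using Suc.IH Suc.prems unfolding sg_def by simp
  have h1: "cg a 2 (G a (Suc j) * X) (sg * (1 - TT a * Hs (Suc j)) * X)"
    by (rule cg_mult_loc2[OF IH locX])
  have eq: "sg * (1 - TT a * Hs (Suc j)) * X
      = (- sg) * (1 - TT a * Hs (Suc (Suc j))) + TT a * TT a * ((- sg) * Hs (Suc j) / qint (Suc j))"
    unfolding X_def HS by (rule alg1) (simp add: qint_ne0)
  have locsg: "loc a sg" unfolding sg_def by (rule loc_power[OF loc_uminus[OF loc_1]])
  have locW: "loc a ((- sg) * Hs (Suc j) / qint (Suc j))"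
    using loc_divide_qint[OF assms(1) j1 loc_mult[OF loc_uminus[OF locsg] loc_Hs[OF assms(1)]]] Suc.prems
    by simp
  have h3: "cg a 2 ((- sg) * (1 - TT a * Hs (Suc (Suc j))) + TT a * TT a * ((- sg) * Hs (Suc j) / qint (Suc j)))
      ((- sg) * (1 - TT a * Hs (Suc (Suc j))) + 0)"
    by (rule cg_add[OF cg_refl cg_TT2[OF assms(1) locW]])
  have "cg a 2 (G a (Suc j) * X) ((- sg) * (1 - TT a * Hs (Suc (Suc j))) + 0)"
    using cg_trans[OF h1[unfolded eq] h3] .
  then show ?case unfolding GS sg_def by simp
qed



lemma cg_eps2: assumes "cg a 1 e 0" "loc a W" shows "cg a 2 (e * e * W) 0"
proof -
  have "cg a (1 + 1) (e * e) 0" using cg_zero_loc[OF assms(1) assms(1)] .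
  then have "cg a 2 (e * e) 0" unfolding one_add_one .
  then have "cg a 2 (e * e * W) (0 * W)" using assms(2) by (rule cg_mult_loc2)
  then show ?thesis by simp
qed

lemma pow_cong:
  assumes "cg a 2 y (1 + e)" "cg a 1 e 0" "loc a y" "loc a e"
  shows "cg a 2 (y ^ n) (1 + of_nat n * e)"
proof (induction n)
  case 0 then show ?case by simp
next
  case (Suc n)
  have l1: "loc a (1 + of_nat n * e)" by (rule loc_add[OF loc_1 loc_mult[OF loc_of_nat assms(4)]])
  have h1: "cg a 2 (y * y ^ n) (y * (1 + of_nat n * e))" by (rule cg_mult_loc[OF Suc.IH assms(3)])
  have h2: "cg a 2 (y * (1 + of_nat n * e)) ((1 + e) * (1 + of_nat n * e))" by (rule cg_mult_loc2[OF assms(1) l1])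
  have eq: "(1 + e) * (1 + of_nat n * e) = (1 + of_nat (Suc n) * e) + e * e * of_nat n"
    by (simp add: algebra_simps)
  have h3: "cg a 2 ((1 + of_nat (Suc n) * e) + e * e * of_nat n) ((1 + of_nat (Suc n) * e) + 0)"
    by (rule cg_add[OF cg_refl cg_eps2[OF assms(2) loc_of_nat]])
  have "cg a 2 (y * y ^ n) ((1 + of_nat (Suc n) * e) + 0)"
    using cg_trans[OF cg_trans[OF h1 h2[unfolded eq]] h3] .
  then show ?case by simp
qed

definition dl :: "nat \<Rightarrow> rfun" where "dl a = (qvar - 1) * tt a"

lemma cg_dl: assumes "a > 0" shows "cg a 1 (dl a) 0"
  using cg_mult_loc[OF cg_tt[OF assms], of "qvar - 1"] unfolding dl_def
  by (simp add: loc_diff[OF loc_qvar loc_1])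

lemma loc_dl: "loc a (dl a)" unfolding dl_def by (rule loc_mult[OF loc_diff[OF loc_qvar loc_1] loc_tt])

lemma W_cong: assumes "a > 0"
  shows "cg a 2 (qvar powi (int (NN a) * e)) (1 + of_int e * dl a)"
proof (cases "e \<ge> 0")
  case True
  have x: "qvar ^ NN a = 1 + dl a" unfolding dl_def by (rule qN_eq)
  have "cg a 2 ((qvar ^ NN a) ^ nat e) (1 + of_nat (nat e) * dl a)"
    by (rule pow_cong[OF cg_eq[OF x] cg_dl[OF assms] loc_power[OF loc_qvar] loc_dl])
  moreover have "qvar powi (int (NN a) * e) = (qvar ^ NN a) ^ nat e"
    using True by (simp only: power_int_mult power_int_of_nat) (simp add: power_int_def)
  moreover have "(of_nat (nat e) :: rfun) = of_int e" using True by simp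
  ultimately show ?thesis by simp
next
  case False
  define x where "x = qvar ^ NN a"
  have x: "x = 1 + dl a" unfolding dl_def x_def by (rule qN_eq)
  have xn0: "x \<noteq> 0" unfolding x_def using qvar_ne0 by simp
  have locix: "loc a (1 / x)"
  proof -
    have "1 / x = qvar powi (- int (NN a))" unfolding x_def by (simp add: power_int_minus divide_inverse)
    then show ?thesis using loc_qvar_powi[OF assms] by simp
  qed
  have eq: "1 / x = (1 + (- dl a)) + dl a * dl a * (1 / x)"
    using xn0 unfolding x by (simp add: field_simps)
  have c1a: "cg a 2 ((1 + (- dl a)) + dl a * dl a * (1 / x)) ((1 + (- dl a)) + 0)"
    by (rule cg_add[OF cg_refl cg_eps2[OF cg_dl[OF assms] locix]])
  have c1: "cg a 2 (1 / x) (1 + (- dl a))"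
    using cg_trans[OF cg_eq[OF eq] c1a] by simp
  have c2: "cg a 1 (- dl a) 0" using cg_uminus[OF cg_dl[OF assms]] by simp
  have c: "cg a 2 ((1 / x) ^ nat (- e)) (1 + of_nat (nat (- e)) * (- dl a))"
    by (rule pow_cong[OF c1 c2 locix loc_uminus[OF loc_dl]])
  have e1: "qvar powi (int (NN a) * e) = (1 / x) ^ nat (- e)"
  proof -
    have "qvar powi (int (NN a) * e) = x powi e" unfolding x_def by (simp add: power_int_mult)
    also have "\<dots> = inverse x ^ nat (- e)" using False by (simp add: power_int_def)
    finally show ?thesis by (simp add: divide_inverse)
  qed
  have e2: "1 + (of_nat (nat (- e)) :: rfun) * (- dl a) = 1 + of_int e * dl a" using False by simp
  show ?thesis using c unfolding e1 e2 .
qed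




lemma sq_mod3: "(y::int)^2 mod 3 \<noteq> 2"
proof -
  have "y^2 mod 3 = (y mod 3)^2 mod 3" by (simp add: power_mod)
  moreover have "y mod 3 = 0 \<or> y mod 3 = 1 \<or> y mod 3 = 2" by presburger
  ultimately show ?thesis by auto
qed

lemma Leg3:
  "Legendre (int k) 3 = (if k mod 3 = 0 then 0 else if k mod 3 = 1 then 1 else -1)"
proof -
  have c0: "[int k = 0] (mod 3) \<longleftrightarrow> k mod 3 = 0" unfolding cong_def by presburger
  have q1: "k mod 3 = 1 \<Longrightarrow> QuadRes 3 (int k)"
    unfolding QuadRes_def cong_def by (rule exI[of _ 1]) (simp; presburger)
  have q2: "k mod 3 = 2 \<Longrightarrow> \<not> QuadRes 3 (int k)"
  proof
    assume "k mod 3 = 2" "QuadRes 3 (int k)"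
    then obtain y where "y^2 mod 3 = int k mod 3" unfolding QuadRes_def cong_def by blast
    then have "y^2 mod 3 = 2" using \<open>k mod 3 = 2\<close> by presburger
    then show False using sq_mod3 by blast
  qed
  have "k mod 3 = 0 \<or> k mod 3 = 1 \<or> k mod 3 = 2" by presburger
  then show ?thesis unfolding Legendre_def using c0 q1 q2 by auto
qed

lemma mod3_2: "(3 * x + 2) mod 3 = (2::nat)" by presburger
lemma mod3_1: "(3 * x + 1) mod 3 = (1::nat)" by presburger

lemma l1: "1 \<le> b \<and> b \<le> (N::nat) - 1 \<and> b mod 3 = 1 \<Longrightarrow> N - (N - b) = b" by (elim conjE) linarith
lemma l2: assumes "(N::nat) mod 3 = 0" "1 \<le> b \<and> b \<le> N - 1 \<and> b mod 3 = 1"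
  shows "1 \<le> N - b \<and> N - b \<le> N - 1 \<and> (N - b) mod 3 = 2"
proof -
  have h: "1 \<le> b" "b \<le> N - 1" "b mod 3 = 1" using assms(2) by simp_all
  obtain u where u: "N = 3 * u" using assms(1) by auto
  have v: "b = 3 * (b div 3) + 1" using h(3) by (metis div_mult_mod_eq mult.commute)
  define v where "v = b div 3"
  have "v < u" using h(2) u v unfolding v_def by linarith
  then have e: "N - b = 3 * (u - v - 1) + 2" using u v unfolding v_def by linarith
  have m: "(N - b) mod 3 = 2" unfolding e by (rule mod3_2)
  show ?thesis using h m e by linarith
qed

lemma l3: assumes "(N::nat) mod 3 = 0" "1 \<le> b \<and> b \<le> N - 1 \<and> b mod 3 = 2"
  shows "1 \<le> N - b \<and> N - b \<le> N - 1 \<and> (N - b) mod 3 = 1"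
proof -
  have h: "1 \<le> b" "b \<le> N - 1" "b mod 3 = 2" using assms(2) by simp_all
  obtain u where u: "N = 3 * u" using assms(1) by auto
  have v: "b = 3 * (b div 3) + 2" using h(3) by (metis div_mult_mod_eq mult.commute)
  define v where "v = b div 3"
  have "v < u" using h(2) u v unfolding v_def by linarith
  then have e: "N - b = 3 * (u - v - 1) + 1" using u v unfolding v_def by linarith
  have m: "(N - b) mod 3 = 1" unfolding e by (rule mod3_1)
  show ?thesis using h m e by linarith
qed

lemma pair_sum:
  fixes f :: "nat \<Rightarrow> 'b::comm_monoid_add"
  assumes "N mod 3 = 0" "\<And>k. k mod 3 = 0 \<Longrightarrow> f k = 0"
  shows "sum f {1..N-1} = (\<Sum>k\<in>{k. 1 \<le> k \<and> k \<le> N - 1 \<and> k mod 3 = 1}. f k + f (N - k))"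
proof -
  define K0 where "K0 = {k. 1 \<le> k \<and> k \<le> N - 1 \<and> k mod 3 = 0}"
  define K1 where "K1 = {k. 1 \<le> k \<and> k \<le> N - 1 \<and> k mod 3 = 1}"
  define K2 where "K2 = {k. 1 \<le> k \<and> k \<le> N - 1 \<and> k mod 3 = 2}"
  have fin: "finite K0" "finite K1" "finite K2" unfolding K0_def K1_def K2_def by simp_all
  have Uk: "k \<in> {1..N-1} \<longleftrightarrow> k \<in> K0 \<union> (K1 \<union> K2)" for k
  proof -
    have "k mod 3 = 0 \<or> k mod 3 = 1 \<or> k mod 3 = 2" by presburger
    then show ?thesis unfolding K0_def K1_def K2_def by auto
  qed
  have U: "{1..N-1} = K0 \<union> (K1 \<union> K2)" using Uk by blast
  have d1: "K0 \<inter> (K1 \<union> K2) = {}" unfolding K0_def K1_def K2_def by auto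
  have d2: "K1 \<inter> K2 = {}" unfolding K1_def K2_def by auto
  have "sum f {1..N-1} = sum f K0 + sum f (K1 \<union> K2)"
    unfolding U by (rule sum.union_disjoint) (use fin d1 in simp_all)
  also have "sum f (K1 \<union> K2) = sum f K1 + sum f K2"
    by (rule sum.union_disjoint) (use fin d2 in simp_all)
  also have "sum f K0 = 0" unfolding K0_def using assms(2) by simp
  also have "sum f K2 = (\<Sum>k\<in>K1. f (N - k))"
  proof (rule sum.reindex_bij_witness[of _ "\<lambda>k. N - k" "\<lambda>k. N - k"])
    show "\<And>b. b \<in> K1 \<Longrightarrow> N - (N - b) = b" unfolding K1_def mem_Collect_eq by (elim conjE) linarith
    show "\<And>a. a \<in> K2 \<Longrightarrow> N - (N - a) = a" unfolding K2_def mem_Collect_eq by (elim conjE) linarith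
    show "\<And>b. b \<in> K1 \<Longrightarrow> N - b \<in> K2" unfolding K1_def K2_def mem_Collect_eq using assms(1) by (rule l2)
    show "\<And>a. a \<in> K2 \<Longrightarrow> N - a \<in> K1" unfolding K1_def K2_def mem_Collect_eq using assms(1) by (rule l3)
  next
    fix a assume "a \<in> K2"
    then have "N - (N - a) = a" unfolding K2_def mem_Collect_eq by (elim conjE) linarith
    then show "f (N - (N - a)) = f a" by simp
  qed
  finally show ?thesis unfolding K1_def by (simp add: sum.distrib)
qed



lemma cg_of_tt: assumes "a > 0" "loc a X" "A - B = tt a * X" shows "cg a 1 A B"
proof (rule cgI)
  show "loc a (qint (MM a) * X)" by (rule loc_mult[OF loc_qint assms(2)])
  show "A - B = Ph a ^ 1 * (qint (MM a) * X)" using assms(3) tt_eq[OF assms(1)] by (simp add: mult.assoc)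
qed

lemma refl_alg:
  fixes Q p r t k q :: rfun
  assumes "Q = p * (t - k)" "p * r = 1" "(1 - q) * k = 1 - r" "Q \<noteq> 0" "k \<noteq> 0"
  shows "1 / Q - ((1 - q) - 1 / k) = t * (1 / Q) * (1 / k)"
proof -
  have tk: "t - k \<noteq> 0" using assms(1,4) by auto
  have p0: "p \<noteq> 0" using assms(1,4) by auto
  have r: "r = 1 / p" using assms(2) p0 by (simp add: field_simps)
  have q: "1 - q = (1 - r) / k" using assms(3,5) by (simp add: field_simps)
  show ?thesis unfolding assms(1) q r using tk p0 assms(5) by (simp add: field_simps)
qed

lemma loc_inv_qint_refl: assumes "a > 0" "0 < j" "j < NN a" shows "loc a (1 / qint (NN a - j))"
  using assms by (intro loc_inv_qint) (auto simp: NN_def)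

lemma inv_refl:
  assumes "a > 0" "0 < j" "j < NN a"
  shows "cg a 1 (1 / qint (NN a - j)) ((1 - qvar) - 1 / qint j)"
proof (rule cg_of_tt[OF assms(1)])
  show "loc a ((1 / qint (NN a - j)) * (1 / qint j))"
    using assms by (intro loc_mult loc_inv_qint) (auto simp: NN_def)
  have "1 / qint (NN a - j) - ((1 - qvar) - 1 / qint j) = tt a * (1 / qint (NN a - j)) * (1 / qint j)"
  proof (rule refl_alg)
    show "qint (NN a - j) = qvar powi (- int j) * (tt a - qint j)"
      unfolding tt_def using assms(3) by (simp add: qint_refl)
    show "qvar powi (- int j) * qvar ^ j = 1" using qvar_ne0 by (simp add: power_int_minus)
    show "(1 - qvar) * qint j = 1 - qvar ^ j" by (rule qint_geom)
    show "qint (NN a - j) \<noteq> 0" using assms(3) by (simp add: qint_ne0)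
    show "qint j \<noteq> 0" using assms(2) by (simp add: qint_ne0)
  qed
  then show "1 / qint (NN a - j) - ((1 - qvar) - 1 / qint j) = tt a * ((1 / qint (NN a - j)) * (1 / qint j))"
    by (simp add: mult.assoc)
qed

lemma to_fract_2: "to_fract (2 :: rat poly) = 2"
  using to_fract_add[of "1::rat poly" 1] by (simp add: one_add_one)

lemma two_unit: "is_unit (2::rat poly)"
proof -
  have t2: "(2::rat poly) = [:2:]" by (simp add: numeral_poly)
  have "(1::rat) = 2 * (1/2)" by simp
  then have "(2::rat) dvd 1" by (rule dvdI)
  then show ?thesis unfolding t2 is_unit_const_poly_iff .
qed

lemma loc_half: "loc a (1 / 2)"
proof -
  have "loc a (1 / to_fract (2 :: rat poly))"
    by (rule loc_inv) (simp_all add: is_unit_left_imp_coprime[OF two_unit])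
  then show ?thesis by (simp add: to_fract_2)
qed

lemma sum_refl_eq:
  fixes N :: nat shows "(\<Sum>i\<in>{1..<N}. f (N - i)) = (\<Sum>i\<in>{1..<N}. f i :: rfun)"
proof (rule sum.reindex_bij_witness[of _ "\<lambda>i. N - i" "\<lambda>i. N - i"])
qed auto

lemma Hs_N: assumes "a > 0"
  shows "cg a 1 (Hs (NN a)) (of_nat (NN a - 1) * (1 - qvar) / 2)"
proof -
  have "cg a 1 (\<Sum>i\<in>{1..<NN a}. 1 / qint (NN a - i)) (\<Sum>i\<in>{1..<NN a}. (1 - qvar) - 1 / qint i)"
    by (rule cg_sum) (rule inv_refl[OF assms], auto)
  moreover have "(\<Sum>i\<in>{1..<NN a}. 1 / qint (NN a - i)) = Hs (NN a)"
    unfolding Hs_def by (rule sum_refl_eq)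
  moreover have "(\<Sum>i\<in>{1..<NN a}. (1 - qvar) - 1 / qint i) = of_nat (NN a - 1) * (1 - qvar) - Hs (NN a)"
    unfolding Hs_def by (simp add: sum_subtractf)
  ultimately have c: "cg a 1 (Hs (NN a)) (of_nat (NN a - 1) * (1 - qvar) - Hs (NN a))" by simp
  have "cg a 1 (Hs (NN a) + Hs (NN a)) ((of_nat (NN a - 1) * (1 - qvar) - Hs (NN a)) + Hs (NN a))"
    by (rule cg_add[OF c cg_refl])
  then have "cg a 1 (Hs (NN a) + Hs (NN a)) (of_nat (NN a - 1) * (1 - qvar))" by simp
  then have "cg a 1 (1 / 2 * (Hs (NN a) + Hs (NN a))) (1 / 2 * (of_nat (NN a - 1) * (1 - qvar)))"
    by (rule cg_mult_loc[OF _ loc_half])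
  then show ?thesis by simp
qed

lemma Hs_refl: assumes "a > 0" "1 \<le> k" "k < NN a"
  shows "cg a 1 (Hs (NN a - k)) (Hs (NN a) - of_nat k * (1 - qvar) + Hs (Suc k))"
proof -
  have split: "Hs (NN a) = Hs (NN a - k) + (\<Sum>i\<in>{NN a - k..<NN a}. 1 / qint i)"
    unfolding Hs_def using assms by (subst sum.atLeastLessThan_concat[symmetric, of 1 "NN a - k"]) auto
  have re: "(\<Sum>i\<in>{NN a - k..<NN a}. 1 / qint i) = (\<Sum>j\<in>{1..k}. 1 / qint (NN a - j))"
  proof (rule sum.reindex_bij_witness[of _ "\<lambda>i. NN a - i" "\<lambda>i. NN a - i"])
  qed (use assms in auto)
  have "cg a 1 (\<Sum>j\<in>{1..k}. 1 / qint (NN a - j)) (\<Sum>j\<in>{1..k}. (1 - qvar) - 1 / qint j)"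
    by (rule cg_sum) (rule inv_refl[OF assms(1)], use assms in auto)
  moreover have "(\<Sum>j\<in>{1..k}. (1 - qvar) - 1 / qint j) = of_nat k * (1 - qvar) - Hs (Suc k)"
    unfolding Hs_def by (simp add: sum_subtractf atLeastLessThanSuc_atLeastAtMost)
  ultimately have c: "cg a 1 (\<Sum>i\<in>{NN a - k..<NN a}. 1 / qint i) (of_nat k * (1 - qvar) - Hs (Suc k))"
    unfolding re by simp
  have e1: "Hs (NN a) - (\<Sum>i\<in>{NN a - k..<NN a}. 1 / qint i) = Hs (NN a - k)" using split by simp
  have e2: "Hs (NN a) - (of_nat k * (1 - qvar) - Hs (Suc k)) = Hs (NN a) - of_nat k * (1 - qvar) + Hs (Suc k)"
    by (simp add: algebra_simps)
  have "cg a 1 (Hs (NN a) - (\<Sum>i\<in>{NN a - k..<NN a}. 1 / qint i)) (Hs (NN a) - (of_nat k * (1 - qvar) - Hs (Suc k)))"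
    by (rule cg_diff[OF cg_refl c])
  then show ?thesis unfolding e1 e2 .
qed



lemma qpow_add: "qvar powi x * qvar powi y = qvar powi (x + y)"
  using power_int_add[of qvar x y] qvar_ne0 by simp

lemma even_tri: "even (n * (n - 1 :: nat))"
  by (cases "even n") auto

lemma two_div2: "even (x::nat) \<Longrightarrow> 2 * int (x div 2) = int x"
  by (metis dvd_mult_div_cancel of_nat_mult of_nat_numeral)

lemma NN_odd: "odd (NN a)" by (simp add: NN_def)

definition mm :: "nat \<Rightarrow> nat \<Rightarrow> int" where "mm a k = (int (NN a) - 1) div 2 - int k"

lemma two_mm: "2 * mm a k = int (NN a) - 1 - 2 * int k"
proof -
  have "even (int (NN a) - 1)" using NN_odd[of a] by simp
  then show ?thesis unfolding mm_def by (simp add: algebra_simps)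
qed

lemma expo: assumes "1 \<le> k" "k < NN a"
  shows "int ((NN a - k) * (NN a - k - 1) div 2) = int (NN a) * mm a k + int (k * (k - 1) div 2) + int k"
proof -
  define N where "N = NN a"
  have kN: "k < N" using assms N_def by simp
  have h1: "2 * int ((N - k) * (N - k - 1) div 2) = int ((N - k) * (N - k - 1))"
    by (rule two_div2) (metis even_tri diff_diff_left)
  have h2: "2 * int (k * (k - 1) div 2) = int (k * (k - 1))" by (rule two_div2[OF even_tri])
  have h3: "int ((N - k) * (N - k - 1)) = (int N - int k) * (int N - int k - 1)" using kN by (simp add: of_nat_diff)
  have h4: "int (k * (k - 1)) = int k * (int k - 1)" using assms(1) by (simp add: of_nat_diff)
  have "2 * int ((N - k) * (N - k - 1) div 2) = 2 * (int N * mm a k + int (k * (k - 1) div 2) + int k)"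
    unfolding h1 h3 distrib_left h2 h4 mult.left_commute[of 2 "int N"] two_mm N_def[symmetric]
    by (simp add: algebra_simps)
  then show ?thesis unfolding N_def by simp
qed

lemma neg1_pow_diff: assumes "even (x::nat)" "k \<le> x" shows "((-1)::rfun) ^ (x - k) = (-1) ^ k"
proof -
  have "((-1)::rfun) ^ (x - k) * (-1) ^ k = (-1) ^ x" using assms(2) by (simp add: power_add[symmetric])
  also have "\<dots> = 1" using assms(1) by simp
  finally have e: "((-1)::rfun) ^ (x - k) * (-1) ^ k = 1" .
  have ss: "((-1)::rfun) ^ k * (-1) ^ k = 1"
  proof -
    have "((-1)::rfun) ^ k * (-1) ^ k = ((-1) * (-1)) ^ k" by (simp only: power_mult_distrib)
    then show ?thesis by simp
  qed
  have "((-1)::rfun) ^ (x - k) = (-1) ^ (x - k) * ((-1) ^ k * (-1) ^ k)" unfolding ss by simp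
  also have "\<dots> = ((-1) ^ (x - k) * (-1) ^ k) * (-1) ^ k" by (simp only: mult.assoc)
  also have "\<dots> = (-1) ^ k" unfolding e by simp
  finally show ?thesis .
qed

definition gg :: "(int \<Rightarrow> int) \<Rightarrow> nat \<Rightarrow> rfun" where
  "gg \<psi> k = qvar powi (\<psi> (int k)) * of_int (Legendre (int k) 3) * ((-1) ^ (k - 1) * Ek k) / qint k"

definition Cq :: "(int \<Rightarrow> int) \<Rightarrow> nat \<Rightarrow> rfun" where
  "Cq \<psi> k = (-1) ^ (k - 1) * Ek k * qvar powi (\<psi> (int k))"

definition dd :: "(int \<Rightarrow> int) \<Rightarrow> nat \<Rightarrow> nat \<Rightarrow> int" where
  "dd \<psi> a k = (\<psi> (int (NN a) - int k) - \<psi> (int k)) div int (NN a)"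

definition ee :: "(int \<Rightarrow> int) \<Rightarrow> nat \<Rightarrow> nat \<Rightarrow> int" where
  "ee \<psi> a k = dd \<psi> a k - mm a k"

lemma gg_k: "k mod 3 = 1 \<Longrightarrow> gg \<psi> k = Cq \<psi> k / qint k"
  unfolding gg_def Cq_def by (simp add: Leg3)

lemma gg_refl:
  assumes "1 \<le> k" "k < NN a" "k mod 3 = 1"
    and dv: "int (NN a) dvd \<psi> (int (NN a) - int k) - \<psi> (int k)"
  shows "gg \<psi> (NN a - k) = Cq \<psi> k * qvar powi (int (NN a) * ee \<psi> a k) / (tt a - qint k)"
proof -
  define N where "N = NN a"
  have kN: "k < N" using assms N_def by simp
  have N3: "N mod 3 = 0" using assms unfolding N_def by (cases a) (auto simp: NN_def)
  have m3: "(N - k) mod 3 = 2" using l2[OF N3, of k] assms kN by simp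
  have leg: "Legendre (int (N - k)) 3 = -1" unfolding Leg3 m3 by simp
  have ik: "int (N - k) = int N - int k" using kN by simp
  have sg: "((-1)::rfun) ^ (N - k - 1) = - ((-1) ^ (k - 1))"
  proof -
    have e1: "N - k - 1 = (N - 1) - k" by simp
    have "even (N - 1)" using NN_odd[of a] unfolding N_def by simp
    moreover have "k \<le> N - 1" using kN by simp
    ultimately have "((-1)::rfun) ^ ((N - 1) - k) = (-1) ^ k" by (rule neg1_pow_diff)
    then have "((-1)::rfun) ^ (N - k - 1) = (-1) ^ k" unfolding e1 .
    moreover have "((-1)::rfun) ^ k = - ((-1) ^ (k - 1))" using assms(1)
      by (metis Suc_diff_1 less_le_trans mult_minus1 power_Suc zero_less_one)
    ultimately show ?thesis by simp
  qed
  have qi: "qint (N - k) = qvar powi (- int k) * (tt a - qint k)"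
    unfolding tt_def N_def using kN N_def by (simp add: qint_refl)
  obtain D where D: "\<psi> (int N - int k) = \<psi> (int k) + int N * D" using dv N_def
    by (metis add_diff_cancel_left' diff_add_cancel dvdE)
  have Dd: "dd \<psi> a k = D" unfolding dd_def N_def[symmetric] D using NN_pos[of a] N_def by simp
  have ex: "\<psi> (int N - int k) + - int ((N - k) * (N - k - 1) div 2) + int k
      = - int (k * (k - 1) div 2) + \<psi> (int k) + int N * ee \<psi> a k"
    unfolding D expo[OF assms(1) kN[unfolded N_def], folded N_def] ee_def Dd by (simp add: algebra_simps)
  have "gg \<psi> (N - k) = (-1) ^ (k - 1) * (qvar powi (\<psi> (int N - int k)) * qvar powi (- int ((N - k) * (N - k - 1) div 2)) * qvar powi (int k))
       / (tt a - qint k)"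
    unfolding gg_def leg sg qi Ek_def unfolding ik using qvar_ne0
    by (simp add: power_int_minus field_simps)
  also have "qvar powi (\<psi> (int N - int k)) * qvar powi (- int ((N - k) * (N - k - 1) div 2)) * qvar powi (int k)
      = qvar powi (- int (k * (k - 1) div 2)) * qvar powi (\<psi> (int k)) * qvar powi (int N * ee \<psi> a k)"
    unfolding qpow_add ex ..
  finally show ?thesis unfolding N_def Cq_def Ek_def by (simp add: mult.assoc)
qed



lemma alg2:
  fixes t k q e r :: rfun
  assumes "k \<noteq> 0" "t - k \<noteq> 0" "(1 - q) * k = 1 - r"
  shows "1 / k + (1 + e * ((q - 1) * t)) * (1 / (t - k))
       = - t * (1 - e * (1 - r)) / k ^ 2 + t * t * ((1 - e * (1 - r)) / (k ^ 2 * (t - k)))"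
proof -
  have r: "1 - r = (1 - q) * k" using assms(3) by simp
  show ?thesis unfolding r using assms(1,2) by (simp add: field_simps power2_eq_square)
qed

lemma alg3:
  fixes C k q H M r :: rfun
  assumes "k \<noteq> 0" "(1 - q) * k = 1 - r"
  shows "C / k * H + C * (1 * (- 1 / k)) * (M * (1 - q) + (H + 1 / k)) = - C * (1 + M * (1 - r)) / k ^ 2"
proof -
  have r: "1 - r = (1 - q) * k" using assms(2) by simp
  show ?thesis unfolding r using assms(1) by (simp add: field_simps power2_eq_square)
qed

lemma alg4:
  fixes t k :: rfun
  assumes "k \<noteq> 0" "t - k \<noteq> 0"
  shows "1 / (t - k) - (- 1 / k) = t * (1 / (t - k) / k)"
  using assms by (simp add: field_simps)

lemma loc_Cq: "a > 0 \<Longrightarrow> loc a (Cq \<psi> k)"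
  unfolding Cq_def Ek_def
  by (intro loc_mult loc_power loc_uminus loc_1 loc_qvar_powi)

context
  fixes a :: nat and \<psi> :: "int \<Rightarrow> int" and k :: nat
  assumes a0: "a > 0" and k1: "1 \<le> k" and kN: "k < NN a" and km: "k mod 3 = 1"
    and dv: "int (NN a) dvd \<psi> (int (NN a) - int k) - \<psi> (int k)"
begin

lemma k3: "0 < k" "k < 3 ^ a" using k1 kN by (auto simp: NN_def)

lemma tk_ne: "tt a - qint k \<noteq> 0"
proof
  assume "tt a - qint k = 0"
  then have "qint (NN a - k) = 0" unfolding tt_def using kN by (simp add: qint_refl)
  then show False using kN qint_ne0 by simp
qed

lemma loc_D: "loc a (1 / (tt a - qint k))"
proof -
  have "qint (NN a - k) = qvar powi (- int k) * (tt a - qint k)" unfolding tt_def using kN by (simp add: qint_refl)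
  then have "1 / (tt a - qint k) = qvar powi (- int k) * (1 / qint (NN a - k))"
    using qvar_ne0 by (simp add: power_int_minus field_simps)
  moreover have "loc a (qvar powi (- int k) * (1 / qint (NN a - k)))"
    using kN k1 a0 by (intro loc_mult loc_qvar_powi loc_inv_qint_refl) simp_all
  ultimately show ?thesis by simp
qed

lemma qk_ne: "qint k \<noteq> 0" using k1 by (simp add: qint_ne0)

lemma pairA:
  "cg a 2 (gg \<psi> k + gg \<psi> (NN a - k))
     (- tt a * (Cq \<psi> k * (1 - of_int (ee \<psi> a k) * (1 - qvar ^ k)) / qint k ^ 2))"
proof -
  define D where "D = 1 / (tt a - qint k)"
  define W where "W = qvar powi (int (NN a) * ee \<psi> a k)"
  define e where "e = (of_int (ee \<psi> a k) :: rfun)"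
  define Z where "Z = 1 - e * (1 - qvar ^ k)"
  have locD: "loc a D" unfolding D_def by (rule loc_D)
  have eq1: "gg \<psi> k + gg \<psi> (NN a - k) = Cq \<psi> k * (1 / qint k + W * D)"
    unfolding gg_k[OF km] gg_refl[OF k1 kN km dv] W_def D_def by (simp add: algebra_simps)
  have cW: "cg a 2 W (1 + e * dl a)" unfolding W_def e_def by (rule W_cong[OF a0])
  have c1: "cg a 2 (Cq \<psi> k * (1 / qint k + W * D)) (Cq \<psi> k * (1 / qint k + (1 + e * dl a) * D))"
    by (rule cg_mult_loc[OF cg_add[OF cg_refl cg_mult_loc2[OF cW locD]] loc_Cq[OF a0]])
  have eq2: "1 / qint k + (1 + e * dl a) * D = - tt a * Z / qint k ^ 2 + tt a * tt a * (Z / (qint k ^ 2 * (tt a - qint k)))"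
    unfolding D_def dl_def Z_def by (rule alg2[OF qk_ne tk_ne qint_geom])
  have locR: "loc a (Cq \<psi> k * (Z / (qint k ^ 2 * (tt a - qint k))))"
  proof -
    have "Cq \<psi> k * (Z / (qint k ^ 2 * (tt a - qint k))) = Cq \<psi> k * Z * (1 / qint k) * (1 / qint k) * D"
      unfolding D_def by (simp add: power2_eq_square)
    moreover have "loc a (Cq \<psi> k * Z * (1 / qint k) * (1 / qint k) * D)"
      unfolding Z_def e_def
      by (intro loc_mult loc_Cq[OF a0] loc_diff loc_1 loc_of_int loc_power loc_qvar loc_inv_qint[OF a0 k3] locD)
    ultimately show ?thesis by simp
  qed
  have c2: "cg a 2 (- tt a * (Cq \<psi> k * Z / qint k ^ 2) + tt a * tt a * (Cq \<psi> k * (Z / (qint k ^ 2 * (tt a - qint k)))))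
      (- tt a * (Cq \<psi> k * Z / qint k ^ 2) + 0)"
    by (rule cg_add[OF cg_refl cg_eps2[OF cg_tt[OF a0] locR]])
  have eq3: "Cq \<psi> k * (1 / qint k + (1 + e * dl a) * D)
      = - tt a * (Cq \<psi> k * Z / qint k ^ 2) + tt a * tt a * (Cq \<psi> k * (Z / (qint k ^ 2 * (tt a - qint k))))"
    unfolding eq2 by (simp add: algebra_simps)
  have "cg a 2 (gg \<psi> k + gg \<psi> (NN a - k)) (- tt a * (Cq \<psi> k * Z / qint k ^ 2) + 0)"
    using cg_trans[OF c1[unfolded eq3] c2] unfolding eq1 .
  then show ?thesis unfolding Z_def e_def by simp
qed

end



context
  fixes a :: nat and \<psi> :: "int \<Rightarrow> int" and k :: nat
  assumes a0: "a > 0" and k1: "1 \<le> k" and kN: "k < NN a" and km: "k mod 3 = 1"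
    and dv: "int (NN a) dvd \<psi> (int (NN a) - int k) - \<psi> (int k)"
begin

lemma pairB:
  "cg a 1 (gg \<psi> k * Hs k + gg \<psi> (NN a - k) * Hs (NN a - k))
     (- Cq \<psi> k * (1 + of_int (mm a k) * (1 - qvar ^ k)) / qint k ^ 2)"
proof -
  define D where "D = 1 / (tt a - qint k)"
  define W where "W = qvar powi (int (NN a) * ee \<psi> a k)"
  define e where "e = (of_int (ee \<psi> a k) :: rfun)"
  define M where "M = (of_int (mm a k) :: rfun)"
  define Y where "Y = M * (1 - qvar) + (Hs k + 1 / qint k)"
  have k3: "0 < k" "k < 3 ^ a" using k1 kN by (auto simp: NN_def)
  have locD: "loc a D" unfolding D_def by (rule loc_D[OF a0 k1 kN km dv])
  have qk: "qint k \<noteq> 0" by (rule qk_ne[OF a0 k1 kN km dv])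
  have tk: "tt a - qint k \<noteq> 0" by (rule tk_ne[OF a0 k1 kN km dv])
  have locik: "loc a (- 1 / qint k)" using loc_uminus[OF loc_inv_qint[OF a0 k3]] by simp
  have locW: "loc a W" unfolding W_def by (rule loc_qvar_powi[OF a0])
  have locY: "loc a Y" unfolding Y_def M_def
    using loc_Hs[OF a0, of k] kN
    by (intro loc_add loc_mult loc_of_int loc_diff loc_1 loc_qvar loc_inv_qint[OF a0 k3]) simp_all
  have cW2: "cg a 2 W (1 + e * dl a)" unfolding W_def e_def by (rule W_cong[OF a0])
  have cW: "cg a 1 W 1"
  proof -
    have "cg a 1 W (1 + e * dl a)" by (rule cg_weaken[OF cW2]) simp
    moreover have "cg a 1 (1 + e * dl a) (1 + e * 0)"
      by (rule cg_add[OF cg_refl cg_mult_loc[OF cg_dl[OF a0]]]) (simp add: e_def)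
    ultimately show ?thesis by (simp add: cg_trans)
  qed
  have cD: "cg a 1 D (- 1 / qint k)"
  proof (rule cg_of_tt[OF a0])
    show "loc a (D / qint k)" by (rule loc_divide_qint[OF a0 k3 locD])
    show "D - (- 1 / qint k) = tt a * (D / qint k)" unfolding D_def by (rule alg4[OF qk tk])
  qed
  have cH: "cg a 1 (Hs (NN a - k)) Y"
  proof -
    have h1: "cg a 1 (Hs (NN a - k)) (Hs (NN a) - of_nat k * (1 - qvar) + Hs (Suc k))"
      by (rule Hs_refl[OF a0 k1 kN])
    have h2: "cg a 1 (Hs (NN a) - of_nat k * (1 - qvar) + Hs (Suc k))
         (of_nat (NN a - 1) * (1 - qvar) / 2 - of_nat k * (1 - qvar) + Hs (Suc k))"
      by (rule cg_add[OF cg_diff[OF Hs_N[OF a0] cg_refl] cg_refl])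
    have hs: "Hs (Suc k) = Hs k + 1 / qint k" unfolding Hs_def using k1 by (simp add: sum.atLeastLessThan_Suc)
    have mm2: "(of_nat (NN a - 1) :: rfun) / 2 - of_nat k = M"
    proof -
      have "2 * mm a k = int (NN a) - 1 - 2 * int k" by (rule two_mm)
      then have "(2::rfun) * M = of_int (int (NN a) - 1 - 2 * int k)" unfolding M_def
        by (metis of_int_mult of_int_numeral)
      moreover have "(of_nat (NN a - 1) :: rfun) = of_int (int (NN a) - 1)"
        using NN_pos[of a] by (simp add: of_nat_diff)
      ultimately show ?thesis by (simp add: field_simps)
    qed
    have e3: "of_nat (NN a - 1) * (1 - qvar) / 2 - of_nat k * (1 - qvar) + Hs (Suc k) = Y"
    proof -
      have "of_nat (NN a - 1) * (1 - qvar) / 2 - of_nat k * (1 - qvar) = ((of_nat (NN a - 1) :: rfun) / 2 - of_nat k) * (1 - qvar)"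
        by (simp add: algebra_simps)
      then show ?thesis unfolding Y_def hs mm2 by simp
    qed
    show ?thesis using cg_trans[OF h1 h2] unfolding e3 .
  qed
  have c1: "cg a 1 (W * D) (1 * (- 1 / qint k))" by (rule cg_mult[OF cW cD locW locik])
  have c2: "cg a 1 (W * D * Hs (NN a - k)) (1 * (- 1 / qint k) * Y)"
    by (rule cg_mult[OF c1 cH loc_mult[OF locW locD] locY])
  have c3: "cg a 1 (gg \<psi> k * Hs k + Cq \<psi> k * (W * D * Hs (NN a - k)))
      (gg \<psi> k * Hs k + Cq \<psi> k * (1 * (- 1 / qint k) * Y))"
    by (rule cg_add[OF cg_refl cg_mult_loc[OF c2 loc_Cq[OF a0]]])
  have eqL: "gg \<psi> k * Hs k + gg \<psi> (NN a - k) * Hs (NN a - k) = gg \<psi> k * Hs k + Cq \<psi> k * (W * D * Hs (NN a - k))"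
    unfolding gg_refl[OF k1 kN km dv] W_def D_def by (simp add: algebra_simps)
  have eqR: "gg \<psi> k * Hs k + Cq \<psi> k * (1 * (- 1 / qint k) * Y) = - Cq \<psi> k * (1 + M * (1 - qvar ^ k)) / qint k ^ 2"
  proof -
    have "gg \<psi> k * Hs k + Cq \<psi> k * (1 * (- 1 / qint k) * Y)
        = Cq \<psi> k / qint k * Hs k + Cq \<psi> k * (1 * (- 1 / qint k)) * (M * (1 - qvar) + (Hs k + 1 / qint k))"
      unfolding gg_k[OF km] Y_def by (simp add: mult.assoc)
    also have "\<dots> = - Cq \<psi> k * (1 + M * (1 - qvar ^ k)) / qint k ^ 2"
      by (rule alg3[OF qk qint_geom])
    finally show ?thesis .
  qed
  show ?thesis using c3 unfolding eqL eqR M_def .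
qed

end



lemma main_alg:
  fixes TT tt dl q SX SY R :: rfun
  assumes "TT = tt * (2 + dl)" "dl = (q - 1) * tt" "R = - SX + 2 * SY"
  shows "TT * (- tt * SX) - TT * TT * (- SY) = 2 * tt ^ 2 * R + tt * tt * tt * ((q - 1) * (- SX + (4 + dl) * SY))"
  unfolding assms(1,3) unfolding assms(2) by (simp add: algebra_simps power2_eq_square)

lemma final_div:
  fixes S R P U C :: rfun
  assumes "S - 2 * (P * U) ^ 2 * R = P ^ 3 * C" "P \<noteq> 0" "U \<noteq> 0"
  shows "1 / (2 * (P * U) ^ 2) * S - R = P ^ 1 * (C * (1 / 2) * (1 / U) * (1 / U))"
proof -
  have "S = 2 * (P * U) ^ 2 * R + P ^ 3 * C" using assms(1) by (simp add: algebra_simps)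
  then show ?thesis using assms(2,3) by (simp add: field_simps power2_eq_square power3_eq_cube)
qed



theorem lemma3p2:
  fixes a :: nat and \<psi> :: "int \<Rightarrow> int"
  assumes a_pos: "a > 0"
    and sym: "\<And>k. [\<psi> k = \<psi> (- k)] (mod 3 ^ a)"
    and per: "\<And>k j. j \<in> {1..a} \<Longrightarrow> [\<psi> (k + 3 ^ j) = \<psi> k] (mod 3 ^ j)"
  shows "qcong_mod
    (1 / (2 * qint (3 ^ a) ^ 2) *
       (\<Sum>k\<in>{1..3 ^ a - 1}. qvar powi (\<psi> (int k)) * of_int (Legendre (int k) 3)
            * qbinom (2 * 3 ^ a) k))
    (\<Sum>k\<in>{k. 1 \<le> k \<and> k \<le> 3 ^ a - 1 \<and> k mod 3 = 1}.
        qvar powi (\<psi> (int k) - int (k * (k - 1) div 2)) * (-1) ^ (k - 1) / qint k ^ 2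
        * (1 + rconst (of_int (\<psi> (3 ^ a - int k) - \<psi> (int k)) / 3 ^ a
                       + (3 ^ a - 1) / 2 - of_nat k) * (1 - qvar ^ k)))
    (Phi3 a)"
proof -
  define N where "N = NN a"
  have Nn: "(3::nat) ^ a = N" unfolding N_def NN_def ..
  have Ni: "(3::int) ^ a = int N" unfolding N_def NN_def by simp
  have Nr: "(3::rat) ^ a = of_nat N" unfolding N_def NN_def by simp
  have N3: "N mod 3 = 0" using a_pos unfolding N_def by (cases a) (auto simp: NN_def)
  have Npos: "0 < N" unfolding N_def by (rule NN_pos)
  define K1 where "K1 = {k. 1 \<le> k \<and> k \<le> N - 1 \<and> k mod 3 = 1}"
  have K1D: "1 \<le> k" "k < NN a" "k mod 3 = 1" if "k \<in> K1" for k
    using that Npos unfolding K1_def N_def by auto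
  have finK1: "finite K1" unfolding K1_def by simp
  have dv: "int (NN a) dvd \<psi> (int (NN a) - int k) - \<psi> (int k)" for k
  proof -
    have c1: "[\<psi> (int N - int k) = \<psi> (int k - int N)] (mod int N)"
      using sym[of "int N - int k"] unfolding Ni by simp
    have "[\<psi> (int k - int N + 3 ^ a) = \<psi> (int k - int N)] (mod 3 ^ a)"
      using per[of a "int k - int N"] a_pos by simp
    then have c2: "[\<psi> (int k) = \<psi> (int k - int N)] (mod int N)" unfolding Ni by simp
    have "[\<psi> (int N - int k) = \<psi> (int k)] (mod int N)"
      using cong_trans[OF c1 cong_sym[OF c2]] .
    then show ?thesis unfolding N_def cong_iff_dvd_diff .
  qed
  define tm where "tm k = qvar powi (\<psi> (int k)) * of_int (Legendre (int k) 3) * qbinom (2 * N) k" for k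
  define S where "S = (\<Sum>k\<in>{1..N - 1}. tm k)"
  have cterm: "cg a 3 (tm k) (TT a * gg \<psi> k - TT a * TT a * (gg \<psi> k * Hs k))" if "k \<in> {1..N - 1}" for k
  proof -
    have k1: "1 \<le> k" "k \<le> 2 * NN a" "Suc (k - 1) \<le> NN a" "0 < k" "k < 3 ^ a"
      using that Npos unfolding N_def by (auto simp: NN_def)
    define V where "V = qvar powi (\<psi> (int k)) * of_int (Legendre (int k) 3) * Ek k / qint k"
    have locV: "loc a V" unfolding V_def Ek_def
      by (intro loc_divide_qint[OF a_pos k1(4,5)] loc_mult loc_qvar_powi[OF a_pos] loc_of_int)
    have e1: "tm k = G a k * (TT a * V)"
      unfolding tm_def V_def N_def qbinom_formula[OF k1(1,2)] by (simp add: algebra_simps)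
    have cG: "cg a 2 (G a k) ((-1) ^ (k - 1) * (1 - TT a * Hs k))"
      using G_cong[OF a_pos k1(3)] k1(1) by simp
    have cZ: "cg a 1 (TT a * V) 0" using cg_mult_loc2[OF cg_TT[OF a_pos] locV] by simp
    have "cg a (2 + 1) (G a k * (TT a * V)) ((-1) ^ (k - 1) * (1 - TT a * Hs k) * (TT a * V))"
      by (rule cg_shift[OF cG cZ])
    moreover have "(-1) ^ (k - 1) * (1 - TT a * Hs k) * (TT a * V) = TT a * gg \<psi> k - TT a * TT a * (gg \<psi> k * Hs k)"
    proof -
      have g: "gg \<psi> k = V * (-1) ^ (k - 1)" unfolding gg_def V_def by (simp add: divide_inverse mult_ac)
      show ?thesis unfolding g by (simp add: algebra_simps)
    qed
    ultimately show ?thesis unfolding e1 by simp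
  qed
  have gg0: "gg \<psi> k = 0" if "k mod 3 = 0" for k unfolding gg_def using that by (simp add: Leg3)
  have sumA: "(\<Sum>k\<in>{1..N - 1}. gg \<psi> k) = (\<Sum>k\<in>K1. gg \<psi> k + gg \<psi> (N - k))"
    unfolding K1_def by (rule pair_sum[OF N3]) (rule gg0)
  have sumB: "(\<Sum>k\<in>{1..N - 1}. gg \<psi> k * Hs k) = (\<Sum>k\<in>K1. gg \<psi> k * Hs k + gg \<psi> (N - k) * Hs (N - k))"
    unfolding K1_def by (rule pair_sum[OF N3]) (simp add: gg0)
  have cS: "cg a 3 S (TT a * (\<Sum>k\<in>K1. gg \<psi> k + gg \<psi> (N - k))
       - TT a * TT a * (\<Sum>k\<in>K1. gg \<psi> k * Hs k + gg \<psi> (N - k) * Hs (N - k)))"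
  proof -
    have "cg a 3 S (\<Sum>k\<in>{1..N - 1}. TT a * gg \<psi> k - TT a * TT a * (gg \<psi> k * Hs k))"
      unfolding S_def by (rule cg_sum[OF cterm])
    also have "(\<Sum>k\<in>{1..N - 1}. TT a * gg \<psi> k - TT a * TT a * (gg \<psi> k * Hs k))
       = TT a * (\<Sum>k\<in>{1..N - 1}. gg \<psi> k) - TT a * TT a * (\<Sum>k\<in>{1..N - 1}. gg \<psi> k * Hs k)"
      by (simp add: sum_subtractf sum_distrib_left)
    finally show ?thesis unfolding sumA sumB .
  qed
  define X where "X k = Cq \<psi> k * (1 - of_int (ee \<psi> a k) * (1 - qvar ^ k)) / qint k ^ 2" for k
  define Y where "Y k = Cq \<psi> k * (1 + of_int (mm a k) * (1 - qvar ^ k)) / qint k ^ 2" for k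
  define SX where "SX = (\<Sum>k\<in>K1. X k)"
  define SY where "SY = (\<Sum>k\<in>K1. Y k)"
  have cA: "cg a 2 (\<Sum>k\<in>K1. gg \<psi> k + gg \<psi> (N - k)) (- tt a * SX)"
  proof -
    have "cg a 2 (\<Sum>k\<in>K1. gg \<psi> k + gg \<psi> (N - k)) (\<Sum>k\<in>K1. - tt a * X k)"
      unfolding X_def N_def by (rule cg_sum, rule pairA[OF a_pos K1D dv])
    then show ?thesis unfolding SX_def by (simp add: sum_distrib_left)
  qed
  have cB: "cg a 1 (\<Sum>k\<in>K1. gg \<psi> k * Hs k + gg \<psi> (N - k) * Hs (N - k)) (- SY)"
  proof -
    have "cg a 1 (\<Sum>k\<in>K1. gg \<psi> k * Hs k + gg \<psi> (N - k) * Hs (N - k)) (\<Sum>k\<in>K1. - Y k)"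
    proof (rule cg_sum)
      fix k assume k: "k \<in> K1"
      have "cg a 1 (gg \<psi> k * Hs k + gg \<psi> (NN a - k) * Hs (NN a - k))
         (- Cq \<psi> k * (1 + of_int (mm a k) * (1 - qvar ^ k)) / qint k ^ 2)"
        by (rule pairB[OF a_pos K1D[OF k] dv])
      then show "cg a 1 (gg \<psi> k * Hs k + gg \<psi> (N - k) * Hs (N - k)) (- Y k)"
        unfolding Y_def N_def by simp
    qed
    then show ?thesis unfolding SY_def by (simp add: sum_negf)
  qed
  have cTT2: "cg a 2 (TT a * TT a) 0" using cg_TT2[OF a_pos loc_1] by simp
  have e21: "(2::nat) + 1 = 3" "(1::nat) + 2 = 3" by simp_all
  have c3A: "cg a (2 + 1) ((\<Sum>k\<in>K1. gg \<psi> k + gg \<psi> (N - k)) * TT a) ((- tt a * SX) * TT a)"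
    by (rule cg_shift[OF cA cg_TT[OF a_pos]])
  have c3B: "cg a (1 + 2) ((\<Sum>k\<in>K1. gg \<psi> k * Hs k + gg \<psi> (N - k) * Hs (N - k)) * (TT a * TT a)) ((- SY) * (TT a * TT a))"
    by (rule cg_shift[OF cB cTT2])
  have cMain: "cg a 3 S (TT a * (- tt a * SX) - TT a * TT a * (- SY))"
  proof -
    have "cg a 3 (TT a * (\<Sum>k\<in>K1. gg \<psi> k + gg \<psi> (N - k))
       - TT a * TT a * (\<Sum>k\<in>K1. gg \<psi> k * Hs k + gg \<psi> (N - k) * Hs (N - k)))
       (TT a * (- tt a * SX) - TT a * TT a * (- SY))"
      using cg_diff[OF c3A[unfolded e21] c3B[unfolded e21]] by (simp add: mult.commute)
    then show ?thesis using cg_trans[OF cS] by blast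
  qed
  define R where "R = (\<Sum>k\<in>K1. Cq \<psi> k * (1 + of_int (dd \<psi> a k + mm a k) * (1 - qvar ^ k)) / qint k ^ 2)"
  have RXY: "R = - SX + 2 * SY"
  proof -
    have "R = (\<Sum>k\<in>K1. - X k + 2 * Y k)"
      unfolding R_def X_def Y_def ee_def
      by (intro sum.cong refl) (simp add: algebra_simps diff_divide_distrib add_divide_distrib)
    then show ?thesis unfolding SX_def SY_def by (simp add: sum.distrib sum_negf sum_distrib_left sum_subtractf)
  qed
  have TTe: "TT a = tt a * (2 + dl a)" unfolding TT_eq qN_eq dl_def by simp
  have eqM: "TT a * (- tt a * SX) - TT a * TT a * (- SY) = 2 * tt a ^ 2 * R + tt a * tt a * tt a * ((qvar - 1) * (- SX + (4 + dl a) * SY))"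
    by (rule main_alg[OF TTe dl_def RXY])
  obtain C1 where C1: "loc a C1" "S - (TT a * (- tt a * SX) - TT a * TT a * (- SY)) = Ph a ^ 3 * C1"
    using cMain by (rule cgE)
  define U where "U = qint (MM a)"
  have ttPU: "tt a = Ph a * U" unfolding U_def by (rule tt_eq[OF a_pos])
  have tt0: "tt a \<noteq> 0" unfolding tt_def using NN_pos by (simp add: qint_ne0)
  have P0: "Ph a \<noteq> 0" "U \<noteq> 0" using tt0 unfolding ttPU by auto
  define Q where "Q = (qvar - 1) * (- SX + (4 + dl a) * SY)"
  have locXk: "loc a (X k)" "loc a (Y k)" if "k \<in> K1" for k
  proof -
    have k3: "0 < k" "k < 3 ^ a" using K1D[OF that] by (auto simp: NN_def)
    have "X k = Cq \<psi> k * (1 - of_int (ee \<psi> a k) * (1 - qvar ^ k)) * (1 / qint k) * (1 / qint k)"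
      unfolding X_def by (simp add: power2_eq_square)
    moreover have "loc a (Cq \<psi> k * (1 - of_int (ee \<psi> a k) * (1 - qvar ^ k)) * (1 / qint k) * (1 / qint k))"
      by (intro loc_mult loc_Cq[OF a_pos] loc_diff loc_1 loc_of_int loc_power loc_qvar loc_inv_qint[OF a_pos k3])
    ultimately show "loc a (X k)" by simp
    have "Y k = Cq \<psi> k * (1 + of_int (mm a k) * (1 - qvar ^ k)) * (1 / qint k) * (1 / qint k)"
      unfolding Y_def by (simp add: power2_eq_square)
    moreover have "loc a (Cq \<psi> k * (1 + of_int (mm a k) * (1 - qvar ^ k)) * (1 / qint k) * (1 / qint k))"
      by (intro loc_mult loc_add loc_Cq[OF a_pos] loc_diff loc_1 loc_of_int loc_power loc_qvar loc_inv_qint[OF a_pos k3])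
    ultimately show "loc a (Y k)" by simp
  qed
  have locSX: "loc a SX" unfolding SX_def by (rule loc_sum) (rule locXk(1))
  have locSY: "loc a SY" unfolding SY_def by (rule loc_sum) (rule locXk(2))
  have locUU: "loc a U" unfolding U_def by (rule loc_qint)
  have locQ: "loc a (U * U * U * Q)" unfolding Q_def
    by (intro loc_mult locUU loc_diff loc_qvar loc_1 loc_add loc_uminus locSX locSY loc_numeral loc_dl)
  have eqS: "S - 2 * (Ph a * U) ^ 2 * R = Ph a ^ 3 * (C1 + U * U * U * Q)"
  proof -
    have gen: "m = 2 * t ^ 2 * R + t * t * t * Q \<Longrightarrow> S - 2 * t ^ 2 * R = (S - m) + t * t * t * Q" for m t :: rfun
      by simp
    have A: "S - 2 * tt a ^ 2 * R = (S - (TT a * (- tt a * SX) - TT a * TT a * (- SY))) + tt a * tt a * tt a * Q"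
      by (rule gen) (simp only: eqM Q_def)
    have B: "Ph a ^ 3 * C1 + tt a * tt a * tt a * Q = Ph a ^ 3 * (C1 + U * U * U * Q)"
      unfolding ttPU by (simp add: algebra_simps power3_eq_cube)
    show ?thesis using A B unfolding C1(2) ttPU[symmetric] by simp
  qed
  have locU: "loc a (1 / U)" unfolding U_def
    by (rule loc_inv_qint[OF a_pos MM_pos MM_less[OF a_pos]])
  have fin: "1 / (2 * (Ph a * U) ^ 2) * S - R = Ph a ^ 1 * ((C1 + U * U * U * Q) * (1 / 2) * (1 / U) * (1 / U))"
    by (rule final_div[OF eqS P0])
  have cFin: "cg a 1 (1 / (2 * (Ph a * U) ^ 2) * S) R"
    by (rule cgI[OF _ fin]) (intro loc_mult loc_add C1(1) locQ loc_half locU)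
  have LHS: "1 / (2 * qint (3 ^ a) ^ 2) *
       (\<Sum>k\<in>{1..3 ^ a - 1}. qvar powi (\<psi> (int k)) * of_int (Legendre (int k) 3) * qbinom (2 * 3 ^ a) k)
     = 1 / (2 * (Ph a * U) ^ 2) * S"
    unfolding Nn S_def tm_def ttPU[symmetric] tt_def N_def ..
  have RHS: "(\<Sum>k\<in>{k. 1 \<le> k \<and> k \<le> 3 ^ a - 1 \<and> k mod 3 = 1}.
        qvar powi (\<psi> (int k) - int (k * (k - 1) div 2)) * (-1) ^ (k - 1) / qint k ^ 2
        * (1 + rconst (of_int (\<psi> (3 ^ a - int k) - \<psi> (int k)) / 3 ^ a
                       + (3 ^ a - 1) / 2 - of_nat k) * (1 - qvar ^ k))) = R"
  proof -
    have set: "{k. 1 \<le> k \<and> k \<le> 3 ^ a - 1 \<and> k mod 3 = 1} = K1" unfolding K1_def Nn ..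
    show ?thesis unfolding set R_def
    proof (rule sum.cong[OF refl])
      fix k assume k: "k \<in> K1"
      have dk: "\<psi> (int N - int k) - \<psi> (int k) = int N * dd \<psi> a k"
        unfolding dd_def N_def by (rule dvd_mult_div_cancel[OF dv, symmetric])
      have mmr: "(of_int (mm a k) :: rat) = (of_nat N - 1) / 2 - of_nat k"
      proof -
        have "2 * mm a k = int N - 1 - 2 * int k" unfolding N_def by (rule two_mm)
        then have "(2::rat) * of_int (mm a k) = of_int (int N - 1 - 2 * int k)"
          by (metis of_int_mult of_int_numeral)
        then show ?thesis by (simp add: field_simps)
      qed
      have rho: "(of_int (\<psi> (3 ^ a - int k) - \<psi> (int k)) / 3 ^ a + (3 ^ a - 1) / 2 - of_nat k :: rat)
          = of_int (dd \<psi> a k + mm a k)"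
        unfolding Ni Nr dk using Npos by (simp add: mmr)
      have pw: "qvar powi (\<psi> (int k) - int (k * (k - 1) div 2)) = Ek k * qvar powi (\<psi> (int k))"
        unfolding Ek_def qpow_add by simp
      show "qvar powi (\<psi> (int k) - int (k * (k - 1) div 2)) * (-1) ^ (k - 1) / qint k ^ 2
        * (1 + rconst (of_int (\<psi> (3 ^ a - int k) - \<psi> (int k)) / 3 ^ a
                       + (3 ^ a - 1) / 2 - of_nat k) * (1 - qvar ^ k))
        = Cq \<psi> k * (1 + of_int (dd \<psi> a k + mm a k) * (1 - qvar ^ k)) / qint k ^ 2"
        unfolding rho rconst_of_int pw Cq_def by (simp add: divide_inverse mult_ac)
    qed
  qed
  show ?thesis unfolding LHS RHS by (rule qcong_of_cg[OF cFin])
qed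



end
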